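(* There exists $\theta_0\in(0,\pi/4)$, depending only on $\alpha$, such that for every $\theta\in(0,\theta_0)$ there exists $a_0(\theta)\ge1$ such that for every $a>a_0(\theta)$ and every $b\in(0,1)$ we have $\mathcal R(t,b,\theta)\subset B(p,r_p)$ for all $p\in\mathcal P(a,b,\theta)$ and all $t\in[1,x_p]$.
   Context: $\mathbb H=\mathbb R^3$, $p=(x_p,y_p,z_p)$, group law $(x,y,z)\cdot(x',y',z')=(x+x',y+y',z+z'+\tfrac12(xy'-yx'))$, dilations $\delta_\lambda(x,y,z)=(\lambda x,\lambda y,\lambda^2z)$. Fix $\alpha>0$ such that $d_\alpha(p,q)=\inf\{r>0:\delta_{1/r}(p^{-1}\cdot q)\in B_\alpha\}$ is a distance, $B_\alpha$ the closed Euclidean ball of radius $\alpha$ at $0$. $B(p,r)=\{q:d_\alpha(q,p)\le r\}$, $r_p=d_\alpha(0,p)$. $\mathcal P(a,b,\theta)=\{p: x_p>a,\ |z_p|<b,\ |y_p|<x_p\tan\theta\}$ and $\mathcal R(t,b,\theta)=\{p: x_p=t,\ |z_p|<b,\ |y_p|<x_p\tan\theta\}$. *)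

theory Defs
  imports "HOL-Analysis.Analysis"
begin

type_synonym heis = "real \<times> real \<times> real"

definition xc :: "heis \<Rightarrow> real" where "xc p = fst p"
definition yc :: "heis \<Rightarrow> real" where "yc p = fst (snd p)"
definition zc :: "heis \<Rightarrow> real" where "zc p = snd (snd p)"

definition hmul :: "heis \<Rightarrow> heis \<Rightarrow> heis" where
  "hmul p q = (xc p + xc q, yc p + yc q,
               zc p + zc q + (1/2) * (xc p * yc q - yc p * xc q))"

definition hinv :: "heis \<Rightarrow> heis" where
  "hinv p = (- xc p, - yc p, - zc p)"

definition dil :: "real \<Rightarrow> heis \<Rightarrow> heis" where
  "dil l p = (l * xc p, l * yc p, l^2 * zc p)"

definition Balpha :: "real \<Rightarrow> heis set" where
  "Balpha \<alpha> = {p. (xc p)^2 + (yc p)^2 + (zc p)^2 \<le> \<alpha>^2}"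

definition d_alpha :: "real \<Rightarrow> heis \<Rightarrow> heis \<Rightarrow> real" where
  "d_alpha \<alpha> p q = Inf {r. r > 0 \<and> dil (1/r) (hmul (hinv p) q) \<in> Balpha \<alpha>}"

definition is_distance :: "(heis \<Rightarrow> heis \<Rightarrow> real) \<Rightarrow> bool" where
  "is_distance d \<longleftrightarrow>
     (\<forall>p q. 0 \<le> d p q) \<and> (\<forall>p q. d p q = 0 \<longleftrightarrow> p = q) \<and>
     (\<forall>p q. d p q = d q p) \<and> (\<forall>p q s. d p s \<le> d p q + d q s)"

definition hball :: "real \<Rightarrow> heis \<Rightarrow> real \<Rightarrow> heis set" where
  "hball \<alpha> p r = {q. d_alpha \<alpha> q p \<le> r}"

definition rp :: "real \<Rightarrow> heis \<Rightarrow> real" where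
  "rp \<alpha> p = d_alpha \<alpha> (0,0,0) p"

definition Pset :: "real \<Rightarrow> real \<Rightarrow> real \<Rightarrow> heis set" where
  "Pset a b \<theta> = {p. xc p > a \<and> \<bar>zc p\<bar> < b \<and> \<bar>yc p\<bar> < xc p * tan \<theta>}"

definition Rset :: "real \<Rightarrow> real \<Rightarrow> real \<Rightarrow> heis set" where
  "Rset t b \<theta> = {p. xc p = t \<and> \<bar>zc p\<bar> < b \<and> \<bar>yc p\<bar> < xc p * tan \<theta>}"

end

theory Submission
  imports Defs
begin

lemma key:
  fixes A A' Z u \<alpha> :: real
  assumes "\<alpha>>0" "u\<ge>0" "A*u \<le> \<alpha>^2" "A' \<ge> 0" "A' + \<alpha>*\<bar>Z\<bar> \<le> A"
  shows "A'*u + Z^2*u^2 \<le> \<alpha>^2"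
proof -
  have "\<alpha>*\<bar>Z\<bar> \<le> A" using assms by linarith
  hence "\<alpha>*(\<bar>Z\<bar>*u) \<le> A*u" using assms(2) mult_right_mono by (metis mult.assoc)
  hence "\<alpha>*(\<bar>Z\<bar>*u) \<le> \<alpha>*\<alpha>" using assms(3) by (simp add: power2_eq_square)
  hence h: "\<bar>Z\<bar>*u \<le> \<alpha>" using assms(1) by simp
  have "Z^2*u^2 = (\<bar>Z\<bar>*u)*(\<bar>Z\<bar>*u)" by (simp add: power2_eq_square)
  also have "\<dots> \<le> \<alpha>*(\<bar>Z\<bar>*u)" using h assms(2) by (intro mult_right_mono) auto
  finally have "Z^2*u^2 \<le> \<alpha>*(\<bar>Z\<bar>*u)" .
  moreover have "(A' + \<alpha>*\<bar>Z\<bar>)*u \<le> A*u" using assms mult_right_mono by blast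
  ultimately show ?thesis using assms(3) by (simp add: algebra_simps)
qed

lemma geom:
  fixes x y z t s w T c \<alpha> :: real
  assumes "\<alpha>>0" "c = 1/(4+4*\<alpha>)" "0<T" "T<c" "1\<le>t" "t\<le>x" "\<bar>w\<bar><1" "\<bar>z\<bar><1"
    "\<bar>s\<bar> < t*T" "\<bar>y\<bar> < x*T" "x > 4*\<alpha>"
  shows "(x-t)^2+(y-s)^2 + \<alpha>*\<bar>z - w - (1/2)*(t*y - s*x)\<bar> \<le> x^2+y^2"
proof -
  define P where "P = t*x"
  have xpos: "x>0" using assms by linarith
  have "x \<le> t*x" using mult_right_mono[of 1 t x] xpos assms by simp
  hence P4: "P > 4*\<alpha>" unfolding P_def using assms by linarith
  have "\<bar>t*y - s*x\<bar> \<le> \<bar>t*y\<bar> + \<bar>s*x\<bar>" by (rule abs_triangle_ineq4)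
  also have "\<dots> = t*\<bar>y\<bar> + \<bar>s\<bar>*x" using assms xpos by (simp add: abs_mult)
  also have "\<dots> \<le> t*(x*T) + (t*T)*x" using assms xpos
    by (intro add_mono mult_left_mono mult_right_mono) auto
  also have "\<dots> = 2*P*T" unfolding P_def by simp
  finally have h1: "\<bar>t*y - s*x\<bar> \<le> 2*P*T" .
  have gen: "\<And>D::real. \<bar>z - w - (1/2)*D\<bar> \<le> \<bar>z\<bar> + \<bar>w\<bar> + (1/2)*\<bar>D\<bar>" by arith
  have "\<bar>z - w - (1/2)*(t*y - s*x)\<bar> \<le> \<bar>z\<bar> + \<bar>w\<bar> + (1/2)*\<bar>t*y - s*x\<bar>" by (rule gen)
  hence Zb: "\<bar>z - w - (1/2)*(t*y - s*x)\<bar> \<le> 2 + P*T" using h1 assms by linarith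
  have "\<bar>s*y\<bar> \<le> (t*T)*(x*T)" unfolding abs_mult using assms
    by (intro mult_mono) auto
  also have "\<dots> = P*T^2" unfolding P_def by (simp add: power2_eq_square)
  finally have sy: "s*y \<ge> - (P*T^2)" by linarith
  have "\<bar>s\<bar>^2 \<le> (t*T)^2" using assms by (intro power_mono) auto
  hence "s^2 \<le> (t*T)^2" by simp
  also have "\<dots> = t*t*T^2" by (simp add: power2_eq_square)
  also have "\<dots> \<le> P*T^2" unfolding P_def using assms xpos
    by (intro mult_right_mono mult_left_mono) auto
  finally have s2: "s^2 \<le> P*T^2" .
  have t2: "t^2 \<le> P" unfolding P_def power2_eq_square using assms by (simp add: mult_left_mono)
  have cle: "c \<le> 1/4" using assms(1) unfolding assms(2) by (simp add: divide_simps)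
  have "T \<le> 1/4" using assms(4) cle by linarith
  hence "T^2 \<le> (1/4)^2" using assms(3) by (intro power_mono) auto
  hence T2: "3*T^2 \<le> 3/16" by (simp add: power2_eq_square)
  have aT: "\<alpha>*T \<le> 1/4"
  proof -
    have "\<alpha>*T \<le> \<alpha>*c" using assms(1,4) by (intro mult_left_mono) auto
    also have "\<alpha>*c \<le> 1/4" using assms(1) unfolding assms(2) by (simp add: divide_simps)
    finally show ?thesis .
  qed
  have "P*(9/16) \<le> P*(1 - 3*T^2 - \<alpha>*T)" using T2 aT P4 assms
    by (intro mult_left_mono) auto
  moreover have "2*\<alpha> \<le> P*(9/16)" using P4 assms(1) by linarith
  ultimately have main: "P*(1 - 3*T^2 - \<alpha>*T) \<ge> 2*\<alpha>" by linarith
  have aZ: "\<alpha>*\<bar>z - w - (1/2)*(t*y - s*x)\<bar> \<le> \<alpha>*(2 + P*T)" using Zb assms by simp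
  have "(x-t)^2+(y-s)^2 = x^2+y^2 - 2*P - 2*(s*y) + t^2 + s^2"
    unfolding P_def by (simp add: power2_eq_square algebra_simps)
  thus ?thesis using aZ main sy s2 t2 by (simp add: algebra_simps power2_eq_square)
qed

lemma sq3:
  fixes A B C :: real
  assumes "0\<le>A" "0\<le>B" "0\<le>C"
  shows "A^2+B^2+C^2 \<le> (A+B+C+1)^2"
proof -
  have "(A+B+C+1)^2 = A^2+B^2+C^2 + (2*A*B+2*A*C+2*B*C+2*A+2*B+2*C+1)"
    by (simp add: power2_eq_square algebra_simps)
  moreover have "2*A*B+2*A*C+2*B*C+2*A+2*B+2*C+1 \<ge> 0" using assms by simp
  ultimately show ?thesis by linarith
qed

lemma S_nonempty:
  assumes "\<alpha>>0"
  shows "\<exists>r. r>0 \<and> dil (1/r) g \<in> Balpha \<alpha>"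
proof -
  define M where "M = \<bar>xc g\<bar> + \<bar>yc g\<bar> + \<bar>zc g\<bar> + 1"
  define r where "r = max 1 (M/\<alpha>)"
  have M1: "M \<ge> 1" unfolding M_def by simp
  have r1: "r \<ge> 1" and rM: "r*\<alpha> \<ge> M" unfolding r_def using assms
    by (auto simp: field_simps max_def)
  have "(xc g)^2 + (yc g)^2 + (zc g)^2 \<le> M^2" unfolding M_def
    using sq3[of "\<bar>xc g\<bar>" "\<bar>yc g\<bar>" "\<bar>zc g\<bar>"] by simp
  also have "\<dots> \<le> (r*\<alpha>)^2" using M1 rM by (intro power_mono) auto
  finally have b: "(xc g)^2 + (yc g)^2 + (zc g)^2 \<le> (r*\<alpha>)^2" .
  have "(1/r*xc g)^2 + (1/r*yc g)^2 + ((1/r)^2*zc g)^2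
        \<le> (1/r)^2*((xc g)^2 + (yc g)^2 + (zc g)^2)"
  proof -
    have "((1/r)^2*zc g)^2 = ((1/r)^2)^2 * (zc g)^2" by (simp add: power_mult_distrib)
    also have "\<dots> \<le> (1/r)^2 * (zc g)^2"
    proof (rule mult_right_mono)
      have q1: "(1/r)^2 \<le> 1" using r1 by (simp add: power_le_one)
      have q0: "0 \<le> (1/r)^2" by simp
      have "((1/r)^2)^2 = (1/r)^2*(1/r)^2" by (simp only: power2_eq_square)
      also have "\<dots> \<le> (1/r)^2" by (rule mult_left_le[OF q1 q0])
      finally show "((1/r)^2)^2 \<le> (1/r)^2" .
    qed simp
    finally have zb: "((1/r)^2*zc g)^2 \<le> (1/r)^2 * (zc g)^2" .
    have "(1/r*xc g)^2 + (1/r*yc g)^2 + ((1/r)^2*zc g)^2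
        = (1/r)^2*(xc g)^2 + (1/r)^2*(yc g)^2 + ((1/r)^2*zc g)^2" by (simp only: power_mult_distrib)
    also have "\<dots> \<le> (1/r)^2*(xc g)^2 + (1/r)^2*(yc g)^2 + (1/r)^2 * (zc g)^2" using zb by linarith
    also have "\<dots> = (1/r)^2*((xc g)^2 + (yc g)^2 + (zc g)^2)" by (simp only: distrib_left)
    finally show ?thesis .
  qed
  also have "\<dots> \<le> (1/r)^2*(r*\<alpha>)^2" using b by (intro mult_left_mono) auto
  also have "\<dots> = (1/r*(r*\<alpha>))^2" by (simp only: power_mult_distrib)
  also have "1/r*(r*\<alpha>) = \<alpha>" using r1 by simp
  finally show ?thesis using r1
    by (intro exI[of _ r]) (auto simp: dil_def Balpha_def xc_def yc_def zc_def)
qed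

theorem lemma4p3:
  fixes \<alpha> :: real
  assumes "\<alpha> > 0" and "is_distance (d_alpha \<alpha>)"
  shows "\<exists>\<theta>\<^sub>0. 0 < \<theta>\<^sub>0 \<and> \<theta>\<^sub>0 < pi/4 \<and>
           (\<forall>\<theta>. 0 < \<theta> \<and> \<theta> < \<theta>\<^sub>0 \<longrightarrow>
             (\<exists>a\<^sub>0 \<ge> 1. \<forall>a b. a > a\<^sub>0 \<and> 0 < b \<and> b < 1 \<longrightarrow>
                (\<forall>p \<in> Pset a b \<theta>. \<forall>t. 1 \<le> t \<and> t \<le> xc p \<longrightarrow>
                   Rset t b \<theta> \<subseteq> hball \<alpha> p (rp \<alpha> p))))"
proof -
  define c where "c = 1/(4+4*\<alpha>)"
  have c0: "c > 0" and c1: "c < 1" unfolding c_def using assms(1) by (auto simp: field_simps)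
  have th0: "0 < arctan c" using c0 by (simp add: arctan_less_zero_iff)
  have "arctan c < arctan 1" using c1 arctan_less_iff by blast
  hence th1: "arctan c < pi/4" using arctan_one by linarith
  show ?thesis
  proof (rule exI[of _ "arctan c"], intro conjI th0 th1 allI impI)
    fix \<theta> assume th: "0 < \<theta> \<and> \<theta> < arctan c"
    define T where "T = tan \<theta>"
    have "pi/4 < pi/2" by simp
    have T0: "T > 0" unfolding T_def using th th1 by (intro tan_gt_zero) auto
    have Tc: "T < c" unfolding T_def using th th1
      by (metis tan_arctan tan_monotone pi_gt_zero less_trans neg_less_0_iff_less
          \<open>pi/4 < pi/2\<close>)
    show "\<exists>a\<^sub>0 \<ge> 1. \<forall>a b. a > a\<^sub>0 \<and> 0 < b \<and> b < 1 \<longrightarrow>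
                (\<forall>p \<in> Pset a b \<theta>. \<forall>t. 1 \<le> t \<and> t \<le> xc p \<longrightarrow>
                   Rset t b \<theta> \<subseteq> hball \<alpha> p (rp \<alpha> p))"
    proof (intro exI[of _ "max 1 (4*\<alpha>)"] conjI allI impI ballI subsetI)
      show "1 \<le> max 1 (4*\<alpha>)" by simp
      fix a b p t q
      assume ab: "max 1 (4 * \<alpha>) < a \<and> 0 < b \<and> b < 1" and pP: "p \<in> Pset a b \<theta>"
        and tt: "1 \<le> t \<and> t \<le> xc p" and qR: "q \<in> Rset t b \<theta>"
      obtain x y z where p: "p = (x,y,z)" by (cases p) auto
      obtain s w where q: "q = (t,s,w)" using qR unfolding Rset_def xc_def
        by (cases q) auto
      have hp: "x > a" "\<bar>z\<bar> < b" "\<bar>y\<bar> < x*T"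
        using pP unfolding Pset_def p T_def by (auto simp: xc_def yc_def zc_def)
      have hq: "\<bar>w\<bar> < b" "\<bar>s\<bar> < t*T"
        using qR unfolding Rset_def q T_def by (auto simp: xc_def yc_def zc_def)
      have tx: "1 \<le> t" "t \<le> x" using tt p by (auto simp: xc_def)
      define Z where "Z = z - w - (1/2)*(t*y - s*x)"
      define A where "A = x^2+y^2"
      define A' where "A' = (x-t)^2+(y-s)^2"
      have AA: "A' + \<alpha>*\<bar>Z\<bar> \<le> A" unfolding A_def A'_def Z_def
        using geom[OF assms(1) c_def T0 Tc tx(1) tx(2), of w z s y] hp hq ab by auto
      have gq: "hmul (hinv q) p = (x-t, y-s, Z)"
        unfolding hmul_def hinv_def p q Z_def by (simp add: xc_def yc_def zc_def algebra_simps)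
      have g0: "hmul (hinv (0,0,0)) p = p"
        unfolding hmul_def hinv_def p by (simp add: xc_def yc_def zc_def)
      let ?B = "{r. r > 0 \<and> dil (1/r) (hmul (hinv q) p) \<in> Balpha \<alpha>}"
      let ?S = "{r. r > 0 \<and> dil (1/r) (hmul (hinv (0,0,0)) p) \<in> Balpha \<alpha>}"
      have sub: "?S \<subseteq> ?B"
      proof
        fix r assume "r \<in> ?S"
        hence r0: "r > 0" and rb: "(1/r*x)^2 + (1/r*y)^2 + ((1/r)^2*z)^2 \<le> \<alpha>^2"
          unfolding g0 p by (auto simp: dil_def Balpha_def xc_def yc_def zc_def hmul_def hinv_def)
        define u where "u = (1/r)^2"
        have u0: "u \<ge> 0" unfolding u_def by simp
        have e: "A*u = (1/r*x)^2 + (1/r*y)^2" unfolding A_def u_def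
          by (simp only: power_mult_distrib) (simp add: algebra_simps)
        have "0 \<le> ((1/r)^2*z)^2" by simp
        hence "A*u \<le> \<alpha>^2" using rb e by linarith
        from key[OF assms(1) u0 this _ AA]
        have "A'*u + Z^2*u^2 \<le> \<alpha>^2" unfolding A'_def by simp
        moreover have "A'*u + Z^2*u^2 = (1/r*(x-t))^2 + (1/r*(y-s))^2 + ((1/r)^2*Z)^2"
          unfolding A'_def u_def by (simp only: power_mult_distrib) (simp add: algebra_simps)
        ultimately have "(1/r*(x-t))^2 + (1/r*(y-s))^2 + ((1/r)^2*Z)^2 \<le> \<alpha>^2" by simp
        thus "r \<in> ?B" using r0 unfolding gq
          by (simp add: dil_def Balpha_def xc_def yc_def zc_def)
      qed
      have ne: "?S \<noteq> {}" using S_nonempty[OF assms(1)] by blast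
      have bdd: "bdd_below ?B" by (rule bdd_belowI[of _ 0]) auto
      have "Inf ?B \<le> Inf ?S" by (rule cInf_superset_mono[OF ne bdd sub])
      thus "q \<in> hball \<alpha> p (rp \<alpha> p)" unfolding hball_def rp_def d_alpha_def by simp
    qed
  qed
qed

end
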